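(* Let $\Gamma$ be a Deza graph with parameters $(n,k,k-1,a)$, $k>1$, $\beta=1$. For any $NA$-vertex $x$ and any vertex $y\in N(x,x')$, the vertex $y_b$ also belongs to $N(x,x')$.
   Context: A Deza graph with parameters $(n,k,b,a)$, $a\le b$, is a $k$-regular graph on $n$ vertices in which any two distinct vertices have $a$ or $b$ common neighbours; $\beta$ is the number of vertices $u\ne v$ with exactly $b$ common neighbours with a given vertex $v$. Since $\beta=1$, for each vertex $x$ let $x_b$ denote the unique vertex having $b=k-1$ common neighbours with $x$. A vertex $x$ is an $A$-vertex if $x$ is adjacent to $x_b$, and an $NA$-vertex otherwise. $N(x,y)$ is the set of common neighbours of $x$ and $y$. For an $NA$-vertex $x$, $x'$ denotes the unique neighbour of $x$ not adjacent to $x_b$. *)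

theory Defs
  imports Main
begin

definition simple_graph :: "'a set \<Rightarrow> ('a \<Rightarrow> 'a \<Rightarrow> bool) \<Rightarrow> bool" where
  "simple_graph V E \<longleftrightarrow> finite V \<and> (\<forall>x y. E x y \<longrightarrow> x \<in> V \<and> y \<in> V)
     \<and> (\<forall>x y. E x y \<longrightarrow> E y x) \<and> (\<forall>x. \<not> E x x)"

definition nbrs :: "'a set \<Rightarrow> ('a \<Rightarrow> 'a \<Rightarrow> bool) \<Rightarrow> 'a \<Rightarrow> 'a set" where
  "nbrs V E x = {y \<in> V. E x y}"

definition common_nbrs :: "'a set \<Rightarrow> ('a \<Rightarrow> 'a \<Rightarrow> bool) \<Rightarrow> 'a \<Rightarrow> 'a \<Rightarrow> 'a set" where
  "common_nbrs V E x y = nbrs V E x \<inter> nbrs V E y"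

definition deza_graph :: "'a set \<Rightarrow> ('a \<Rightarrow> 'a \<Rightarrow> bool) \<Rightarrow> nat \<Rightarrow> nat \<Rightarrow> nat \<Rightarrow> nat \<Rightarrow> bool" where
  "deza_graph V E n k b a \<longleftrightarrow> simple_graph V E \<and> card V = n \<and> a \<le> b
     \<and> (\<forall>x\<in>V. card (nbrs V E x) = k)
     \<and> (\<forall>x\<in>V. \<forall>y\<in>V. x \<noteq> y \<longrightarrow> card (common_nbrs V E x y) = a \<or> card (common_nbrs V E x y) = b)"

definition beta_count :: "'a set \<Rightarrow> ('a \<Rightarrow> 'a \<Rightarrow> bool) \<Rightarrow> nat \<Rightarrow> 'a \<Rightarrow> nat" where
  "beta_count V E b v = card {u \<in> V. u \<noteq> v \<and> card (common_nbrs V E v u) = b}"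

text \<open>x_b: the unique vertex having b common neighbours with x (meaningful when beta = 1).\<close>
definition bvert :: "'a set \<Rightarrow> ('a \<Rightarrow> 'a \<Rightarrow> bool) \<Rightarrow> nat \<Rightarrow> 'a \<Rightarrow> 'a" where
  "bvert V E b x = (THE u. u \<in> V \<and> u \<noteq> x \<and> card (common_nbrs V E x u) = b)"

definition NA_vertex :: "'a set \<Rightarrow> ('a \<Rightarrow> 'a \<Rightarrow> bool) \<Rightarrow> nat \<Rightarrow> 'a \<Rightarrow> bool" where
  "NA_vertex V E b x \<longleftrightarrow> x \<in> V \<and> \<not> E x (bvert V E b x)"

definition prime_vert :: "'a set \<Rightarrow> ('a \<Rightarrow> 'a \<Rightarrow> bool) \<Rightarrow> nat \<Rightarrow> 'a \<Rightarrow> 'a" where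
  "prime_vert V E b x = (THE z. z \<in> nbrs V E x \<and> \<not> E z (bvert V E b x))"

end

theory Submission
  imports Defs
begin

locale dz =
  fixes V :: "'a set" and E :: "'a \<Rightarrow> 'a \<Rightarrow> bool" and n k a :: nat
  assumes deza: "deza_graph V E n k (k - 1) a"
    and k1: "k > 1"
    and beta: "\<forall>v\<in>V. beta_count V E (k - 1) v = 1"
begin

abbreviation "N \<equiv> nbrs V E"
abbreviation "bv \<equiv> bvert V E (k - 1)"
abbreviation "pr \<equiv> prime_vert V E (k - 1)"
abbreviation "cn \<equiv> common_nbrs V E"

lemma finV: "finite V" using deza unfolding deza_graph_def simple_graph_def by auto
lemma Ein: "E x y \<Longrightarrow> x \<in> V \<and> y \<in> V" using deza unfolding deza_graph_def simple_graph_def by auto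
lemma Esym: "E x y \<Longrightarrow> E y x" using deza unfolding deza_graph_def simple_graph_def by auto
lemma Eirr: "\<not> E x x" using deza unfolding deza_graph_def simple_graph_def by auto
lemma cardN: "x \<in> V \<Longrightarrow> card (N x) = k" using deza unfolding deza_graph_def by auto
lemma cardcn: "x \<in> V \<Longrightarrow> y \<in> V \<Longrightarrow> x \<noteq> y \<Longrightarrow> card (cn x y) = a \<or> card (cn x y) = k - 1"
  using deza unfolding deza_graph_def by auto
lemma finN: "finite (N x)" using finV unfolding nbrs_def by auto
lemma memN: "w \<in> N x \<longleftrightarrow> w \<in> V \<and> E x w" unfolding nbrs_def by auto
lemma cn_sym: "cn x y = cn y x" unfolding common_nbrs_def by auto

lemma bv_ex: assumes "v \<in> V"
  shows "\<exists>u0. {u \<in> V. u \<noteq> v \<and> card (cn v u) = k - 1} = {u0}"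
proof -
  have "card {u \<in> V. u \<noteq> v \<and> card (cn v u) = k - 1} = 1"
    using beta assms unfolding beta_count_def by auto
  then show ?thesis by (meson card_1_singletonE)
qed

lemma bv_props: assumes "v \<in> V"
  shows "bv v \<in> V \<and> bv v \<noteq> v \<and> card (cn v (bv v)) = k - 1
     \<and> (\<forall>u. u \<in> V \<and> u \<noteq> v \<and> card (cn v u) = k - 1 \<longrightarrow> u = bv v)"
proof -
  obtain u0 where u0: "{u \<in> V. u \<noteq> v \<and> card (cn v u) = k - 1} = {u0}"
    using bv_ex[OF assms] by blast
  have "bv v = u0" unfolding bvert_def
    by (rule the_equality) (use u0 in blast)+
  then show ?thesis using u0 by blast
qed

lemma bv_unique: "v \<in> V \<Longrightarrow> u \<in> V \<Longrightarrow> u \<noteq> v \<Longrightarrow> card (cn v u) = k - 1 \<Longrightarrow> u = bv v"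
  using bv_props by blast

lemma bv_bv: assumes "v \<in> V" shows "bv (bv v) = v"
proof -
  have h: "bv v \<in> V" "bv v \<noteq> v" "card (cn v (bv v)) = k - 1" using bv_props[OF assms] by auto
  show ?thesis using bv_unique[OF h(1) assms] h cn_sym by metis
qed

lemma uniq_out: assumes "v \<in> V" shows "\<exists>!z. z \<in> N v \<and> \<not> E z (bv v)"
proof -
  let ?C = "cn v (bv v)"
  have sub: "?C \<subseteq> N v" unfolding common_nbrs_def by auto
  have c: "card ?C = k - 1" using bv_props[OF assms] by auto
  have "card (N v - ?C) = 1" using card_Diff_subset[OF finite_subset[OF sub finN] sub] c cardN[OF assms] k1
    by simp
  then obtain z where z: "N v - ?C = {z}" by (meson card_1_singletonE)
  have eq: "\<And>w. w \<in> N v - ?C \<longleftrightarrow> w \<in> N v \<and> \<not> E w (bv v)"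
    unfolding common_nbrs_def using memN Esym by blast
  have "\<forall>w. (w \<in> N v \<and> \<not> E w (bv v)) \<longleftrightarrow> w = z"
    using z eq by (metis Diff_iff insert_iff empty_iff)
  then show ?thesis by (intro ex1I[where a=z]) auto
qed

lemma pr_props: assumes "v \<in> V"
  shows "pr v \<in> N v \<and> \<not> E (pr v) (bv v) \<and> (\<forall>w. w \<in> N v \<and> \<not> E w (bv v) \<longrightarrow> w = pr v)"
proof -
  have "pr v \<in> N v \<and> \<not> E (pr v) (bv v)" unfolding prime_vert_def
    by (rule theI') (rule uniq_out[OF assms])
  then show ?thesis using uniq_out[OF assms] by blast
qed

lemma G: assumes "y \<in> V" "z \<in> N y" "z \<noteq> bv y" "\<not> E z (bv y)"
  shows "NA_vertex V E (k - 1) y \<and> pr y = z"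
proof -
  have p: "pr y = z" using pr_props[OF assms(1)] assms by metis
  have "\<not> E y (bv y)"
  proof
    assume "E y (bv y)"
    then have "bv y \<in> N y" using memN Ein by blast
    then show False using uniq_out[OF assms(1)] assms Eirr by blast
  qed
  then show ?thesis using p assms(1) unfolding NA_vertex_def by blast
qed

lemma card_split: assumes "M = insert p C" "p \<notin> C" "finite C"
  shows "card (M \<inter> X) = card (C \<inter> X) + (if p \<in> X then 1 else 0)"
proof (cases "p \<in> X")
  case True
  then have "M \<inter> X = insert p (C \<inter> X)" using assms by auto
  then show ?thesis using True assms by simp
next
  case False
  then have "M \<inter> X = C \<inter> X" using assms by auto
  then show ?thesis using False by simp
qed

lemma key: assumes na: "NA_vertex V E (k - 1) v"
  shows "bv (pr v) = pr (bv v) \<and> pr (pr v) = v \<and> \<not> E (pr (bv v)) v"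
proof -
  define p q u where "p = pr v" and "q = bv v" and "u = pr q"
  have vV: "v \<in> V" using na unfolding NA_vertex_def by auto
  have qV: "q \<in> V" and qv: "q \<noteq> v" using bv_props[OF vV] q_def by auto
  have bq: "bv q = v" using bv_bv[OF vV] q_def by simp
  have vq: "\<not> E v q" using na q_def unfolding NA_vertex_def by auto
  have u1: "u \<in> N q" "\<not> E u v" "\<And>w. w \<in> N q \<Longrightarrow> \<not> E w v \<Longrightarrow> w = u"
    using pr_props[OF qV] bq u_def by auto
  have p1: "p \<in> N v" "\<not> E p q" "\<And>w. w \<in> N v \<Longrightarrow> \<not> E w q \<Longrightarrow> w = p"
    using pr_props[OF vV] q_def p_def by auto
  define C where "C = cn v q"
  have finC: "finite C" unfolding C_def common_nbrs_def using finN by auto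
  have CN: "C \<subseteq> N v" "C \<subseteq> N q" unfolding C_def common_nbrs_def by auto
  have Cmem: "w \<in> C" if "w \<in> N v" "w \<in> N q" for w
    using that unfolding C_def common_nbrs_def by blast
  have Nv: "N v = insert p C" "p \<notin> C"
  proof -
    have "N v \<subseteq> insert p C"
    proof
      fix w assume w: "w \<in> N v"
      show "w \<in> insert p C"
      proof (cases "w \<in> N q")
        case True then show ?thesis using Cmem w by blast
      next
        case False
        then have "\<not> E w q" using w Esym unfolding nbrs_def by blast
        then show ?thesis using p1(3) w by blast
      qed
    qed
    then show "N v = insert p C" using CN p1(1) by blast
    show "p \<notin> C" using CN(2) p1(2) Esym unfolding nbrs_def by blast
  qed
  have Nq: "N q = insert u C" "u \<notin> C"
  proof -
    have "N q \<subseteq> insert u C"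
    proof
      fix w assume w: "w \<in> N q"
      show "w \<in> insert u C"
      proof (cases "w \<in> N v")
        case True then show ?thesis using Cmem w by blast
      next
        case False
        then have "\<not> E w v" using w Esym unfolding nbrs_def by blast
        then show ?thesis using u1(3) w by blast
      qed
    qed
    then show "N q = insert u C" using CN u1(1) by blast
    show "u \<notin> C" using CN(1) u1(2) Esym unfolding nbrs_def by blast
  qed
  have iff: "E w p \<longleftrightarrow> E w u" if w: "w \<in> V" "w \<noteq> v" "w \<noteq> q" for w
  proof -
    have "card (cn v w) \<noteq> k - 1"
    proof
      assume "card (cn v w) = k - 1"
      then have "w = bv v" using bv_unique[OF vV w(1) w(2)] by blast
      then show False using w(3) q_def by simp
    qed
    then have a1: "card (cn v w) = a" using cardcn[OF vV w(1)] w(2) by auto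
    have "card (cn q w) \<noteq> k - 1"
    proof
      assume "card (cn q w) = k - 1"
      then have "w = bv q" using bv_unique[OF qV w(1) w(3)] by blast
      then show False using w(2) bq by simp
    qed
    then have a2: "card (cn q w) = a" using cardcn[OF qV w(1)] w(3) by auto
    have e1: "card (cn v w) = card (C \<inter> N w) + (if p \<in> N w then 1 else 0)"
      unfolding common_nbrs_def by (rule card_split[OF Nv finC])
    have e2: "card (cn q w) = card (C \<inter> N w) + (if u \<in> N w then 1 else 0)"
      unfolding common_nbrs_def by (rule card_split[OF Nq finC])
    have "p \<in> N w \<longleftrightarrow> u \<in> N w" using a1 a2 e1 e2 by (auto split: if_splits)
    then show ?thesis using Ein unfolding nbrs_def by blast
  qed
  have pV: "p \<in> V" and vp: "v \<in> N p" using p1(1) vV Esym unfolding nbrs_def by blast+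
  have uV: "u \<in> V" using u1(1) unfolding nbrs_def by blast
  have up: "u \<noteq> p"
  proof
    assume "u = p"
    moreover have "E v p" using p1(1) unfolding nbrs_def by blast
    ultimately show False using u1(2) Esym by blast
  qed
  have vNu: "v \<notin> N u" using u1(2) Esym unfolding nbrs_def by blast
  have S: "N p \<inter> N u = N p - {v}"
  proof
    show "N p \<inter> N u \<subseteq> N p - {v}" using vNu by blast
    show "N p - {v} \<subseteq> N p \<inter> N u"
    proof
      fix w assume w: "w \<in> N p - {v}"
      have wV: "w \<in> V" and Epw: "E p w" using w unfolding nbrs_def by auto
      have wv: "w \<noteq> v" using w by blast
      have wq: "w \<noteq> q" using Epw p1(2) by blast
      have "E w p" using Esym[OF Epw] .
      then have "E w u" using iff[OF wV wv wq] by blast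
      then have "E u w" by (rule Esym)
      then show "w \<in> N p \<inter> N u" using w uV wV unfolding nbrs_def by blast
    qed
  qed
  have cNp: "card (N p - {v}) = k - 1" using cardN[OF pV] vp finN by simp
  have "card (cn p u) = k - 1" unfolding common_nbrs_def S by (rule cNp)
  then have bp: "bv p = u" using bv_unique[OF pV uV up] by simp
  have "pr p = v"
  proof -
    have v1: "v \<in> N p" by (rule vp)
    have v2: "\<not> E v (bv p)" using bp u1(2) Esym by blast
    have "pr p \<in> N p" "\<not> E (pr p) (bv p)" using pr_props[OF pV] by blast+
    then have "pr p \<in> N p - {v} \<or> pr p = v" by blast
    moreover have "pr p \<notin> N p - {v}"
    proof
      assume "pr p \<in> N p - {v}"
      then have "pr p \<in> N u" using S by blast
      then have "E u (pr p)" unfolding nbrs_def by blast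
      then show False using \<open>\<not> E (pr p) (bv p)\<close> bp Esym by blast
    qed
    ultimately show ?thesis by blast
  qed
  then show ?thesis using bp u1(2) unfolding p_def q_def u_def by simp
qed

end

theorem lemma7:
  fixes V :: "'a set" and E :: "'a \<Rightarrow> 'a \<Rightarrow> bool" and n k a :: nat
  assumes "deza_graph V E n k (k - 1) a"
    and "k > 1"
    and "\<forall>v\<in>V. beta_count V E (k - 1) v = 1"
    and "NA_vertex V E (k - 1) x"
    and "y \<in> common_nbrs V E x (prime_vert V E (k - 1) x)"
  shows "bvert V E (k - 1) y \<in> common_nbrs V E x (prime_vert V E (k - 1) x)"
proof -
  interpret dz V E n k a using assms(1-3) by unfold_locales
  define p where "p = pr x"
  have na: "NA_vertex V E (k - 1) x" by fact
  have xV: "x \<in> V" using na unfolding NA_vertex_def by auto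
  have y: "y \<in> V" "E x y" "E p y" using assms(5) unfolding p_def common_nbrs_def nbrs_def by auto
  have K: "bv p = pr (bv x)" "pr p = x" "\<not> E (pr (bv x)) x" using key[OF na] p_def by auto
  have ybV: "bv y \<in> V" using bv_props[OF y(1)] by auto
  have "E x (bv y)"
  proof (rule ccontr)
    assume ne: "\<not> E x (bv y)"
    have "x \<noteq> bv y"
    proof
      assume "x = bv y"
      then have "bv x = y" using bv_bv[OF y(1)] by simp
      then show False using na y(2) unfolding NA_vertex_def by simp
    qed
    then have "NA_vertex V E (k - 1) y \<and> pr y = x" using G[OF y(1)] ne y(2) memN Esym xV by blast
    then have "pr x = y" using key[of y] by auto
    then show False using y(3) p_def Eirr by simp
  qed
  moreover have "E p (bv y)"
  proof (rule ccontr)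
    assume ne: "\<not> E p (bv y)"
    have "p \<noteq> bv y"
    proof
      assume "p = bv y"
      then have "bv p = y" using bv_bv[OF y(1)] by simp
      then show False using K y(2) Esym by metis
    qed
    have pV: "p \<in> V" using y(3) Ein by blast
    have "NA_vertex V E (k - 1) y \<and> pr y = p" using G[OF y(1)] ne \<open>p \<noteq> bv y\<close> y(3) memN Esym pV by blast
    then have "pr p = y" using key[of y] by auto
    then show False using K y(2) Eirr by simp
  qed
  ultimately show ?thesis using ybV unfolding common_nbrs_def nbrs_def p_def by auto
qed

end
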